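(* Let $\lambda=(a,b)$ with $a\ge b\ge1$, and let $\mu=(\mu_1,\dots,\mu_M)$ be a content with $\sum_i\mu_i=a+b$ such that $\mu_i=2$ for exactly $m$ indices $i$ and $\mu_i=1$ for the remaining indices (so $M=a+b-m$). Then for every $k\ge0$, $$|S_k(\lambda,\mu)|=\frac{a-b+1+2k}{a+1+k-m}\binom{a+b-2m}{b-k-m}$$ (interpreted as $0$ when $b-k-m<0$).
   Context: The shape $(a,b)$ has $a$ left-justified boxes in row 1 and $b$ in row 2. A filling of shape $\lambda$ and content $\mu$ assigns positive integers to boxes so that value $v$ occurs exactly $\mu_v$ times; row-standard means strictly increasing along rows from left to right. Inversion pairs of a row-standard $\tau$: for a box $c$ and $r\ge1$ let $c^{(r)}$ be the box $r$ positions to its right, if it exists. For distinct boxes $c,c'$ in the same column with $\tau(c)<\tau(c')$, let $r\ge1$ be least such that one of $c^{(r)},c'^{(r)}$ does not exist or both exist with $\tau(c^{(r)})\ne\tau(c'^{(r)})$. $(c,c')$ is an inversion pair if either (one does not exist and $c$ lies below $c'$) or (both exist and $\tau(c^{(r)})>\tau(c'^{(r)})$). $S_k(\lambda,\mu)$: row-standard fillings of shape $\lambda$ and content $\mu$ with exactly $k$ inversion pairs (counted as pairs of boxes, with multiplicity). *)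

theory Defs
  imports Complex_Main
begin

text \<open>A filling T is a list of rows (top row first); row i (0-indexed) is the list of
entries of row i+1, left to right. A box is a pair (i,j)
(row index, column index, both 0-indexed).\<close>

definition box_ex :: "nat list list \<Rightarrow> nat \<Rightarrow> nat \<Rightarrow> bool" where
  "box_ex T i j \<longleftrightarrow> i < length T \<and> j < length (T ! i)"

definition tval :: "nat list list \<Rightarrow> nat \<Rightarrow> nat \<Rightarrow> nat" where
  "tval T i j = T ! i ! j"

definition row_standard :: "nat list list \<Rightarrow> bool" where
  "row_standard T \<longleftrightarrow> (\<forall>row \<in> set T. sorted_wrt (<) row)"

definition has_content :: "nat list list \<Rightarrow> nat list \<Rightarrow> bool" where
  "has_content T mu \<longleftrightarrow>
     (\<forall>v. count_list (concat T) v = (if 1 \<le> v \<and> v \<le> length mu then mu ! (v - 1) else 0))"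

definition first_diff :: "nat list list \<Rightarrow> nat \<Rightarrow> nat \<Rightarrow> nat \<Rightarrow> nat" where
  "first_diff T i i' j = (LEAST r. 1 \<le> r \<and>
      (\<not> box_ex T i (j + r) \<or> \<not> box_ex T i' (j + r) \<or> tval T i (j + r) \<noteq> tval T i' (j + r)))"

definition inv_pair :: "nat list list \<Rightarrow> nat \<times> nat \<Rightarrow> nat \<times> nat \<Rightarrow> bool" where
  "inv_pair T c c' \<longleftrightarrow>
     (case c of (i, j) \<Rightarrow> case c' of (i', j') \<Rightarrow>
        j = j' \<and> i \<noteq> i' \<and> box_ex T i j \<and> box_ex T i' j \<and> tval T i j < tval T i' j \<and>
        (let r = first_diff T i i' j in
           ((\<not> box_ex T i (j + r) \<or> \<not> box_ex T i' (j + r)) \<and> i > i') \<or>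
           (box_ex T i (j + r) \<and> box_ex T i' (j + r) \<and> tval T i (j + r) > tval T i' (j + r))))"

definition num_inversions :: "nat list list \<Rightarrow> nat" where
  "num_inversions T = card {(c, c'). inv_pair T c c'}"

definition S :: "nat \<Rightarrow> nat list \<Rightarrow> nat list \<Rightarrow> nat list list set" where
  "S k lam mu = {T. map length T = lam \<and> row_standard T \<and> has_content T mu \<and> num_inversions T = k}"

end

theory Submission
  imports Defs
begin


fun fdl :: "nat list \<Rightarrow> nat list \<Rightarrow> bool option" where
  "fdl (p#ps) (q#qs) = (if p = q then fdl ps qs else Some (q < p))"
| "fdl _ _ = None"

lemma fdl_None:
  "fdl xs ys = None \<Longrightarrow> \<exists>p. \<not>(p < length xs \<and> p < length ys) \<and>
     (\<forall>q<p. q < length xs \<and> q < length ys \<and> xs!q = ys!q)"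
proof (induction xs ys rule: fdl.induct)
  case (1 p ps q qs)
  then have "p = q" "fdl ps qs = None" by (auto split: if_splits)
  then obtain r where r: "\<not>(r < length ps \<and> r < length qs)"
     "\<forall>q<r. q < length ps \<and> q < length qs \<and> ps!q = qs!q" using 1 by auto
  show ?case
    apply (rule exI[of _ "Suc r"])
    using r \<open>p = q\<close> by (auto simp: less_Suc_eq_0_disj)
qed auto

lemma fdl_Some:
  "fdl xs ys = Some v \<Longrightarrow> \<exists>p. p < length xs \<and> p < length ys \<and> xs!p \<noteq> ys!p \<and>
     v = (ys!p < xs!p) \<and> (\<forall>q<p. xs!q = ys!q)"
proof (induction xs ys rule: fdl.induct)
  case (1 p ps q qs)
  show ?case
  proof (cases "p = q")
    case True
    then obtain r where r: "r < length ps \<and> r < length qs \<and> ps!r \<noteq> qs!r \<and>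
     v = (qs!r < ps!r) \<and> (\<forall>q<r. ps!q = qs!q)" using 1 by auto
    show ?thesis
      apply (rule exI[of _ "Suc r"])
      using r True by (auto simp: less_Suc_eq_0_disj)
  next
    case False
    then show ?thesis using 1 by (intro exI[of _ 0]) auto
  qed
qed auto

lemma first_diff_char:
  "\<exists>p. first_diff [x,y] 0 1 j = Suc p \<and>
     (case fdl (drop (Suc j) x) (drop (Suc j) y) of
        None \<Rightarrow> \<not>(Suc j + p < length x \<and> Suc j + p < length y)
      | Some v \<Rightarrow> Suc j + p < length x \<and> Suc j + p < length y \<and>
           x!(Suc j + p) \<noteq> y!(Suc j + p) \<and> v = (y!(Suc j + p) < x!(Suc j + p)))"
proof -
  define P where "P r = (1 \<le> r \<and> (\<not> box_ex [x,y] 0 (j + r) \<or> \<not> box_ex [x,y] 1 (j + r)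
       \<or> tval [x,y] 0 (j + r) \<noteq> tval [x,y] 1 (j + r)))" for r
  have fd: "first_diff [x,y] 0 1 j = (LEAST r. P r)" unfolding first_diff_def P_def by simp
  have P_iff: "P r = (1 \<le> r \<and> (\<not> j + r < length x \<or> \<not> j + r < length y \<or> x!(j+r) \<noteq> y!(j+r)))" for r
    unfolding P_def box_ex_def tval_def by auto
  show ?thesis
  proof (cases "fdl (drop (Suc j) x) (drop (Suc j) y)")
    case None
    from fdl_None[OF this] obtain p where p: "\<not>(p < length (drop (Suc j) x) \<and> p < length (drop (Suc j) y))"
      "\<forall>q<p. q < length (drop (Suc j) x) \<and> q < length (drop (Suc j) y) \<and> drop (Suc j) x!q = drop (Suc j) y!q"
      by blast
    have p2: "\<forall>q<p. Suc j + q < length x \<and> Suc j + q < length y \<and> x!(Suc j + q) = y!(Suc j + q)"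
      using p(2) by auto
    have "(LEAST r. P r) = Suc p"
    proof (rule Least_equality)
      show "P (Suc p)" unfolding P_iff using p(1) by auto
      fix r assume "P r"
      show "Suc p \<le> r"
      proof (rule ccontr)
        assume "\<not> Suc p \<le> r"
        then have "r - 1 < p" "r \<ge> 1" using \<open>P r\<close> P_iff by auto
        then have "j + r = Suc j + (r - 1)" by auto
        then show False using p2 \<open>r - 1 < p\<close> \<open>P r\<close> P_iff by metis
      qed
    qed
    then show ?thesis using fd None p(1) by auto
  next
    case (Some v)
    from fdl_Some[OF this] obtain p where p: "p < length (drop (Suc j) x)" "p < length (drop (Suc j) y)"
      "drop (Suc j) x!p \<noteq> drop (Suc j) y!p" "v = (drop (Suc j) y!p < drop (Suc j) x!p)"
      "\<forall>q<p. drop (Suc j) x!q = drop (Suc j) y!q"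
      by blast
    have p1: "Suc j + p < length x" "Suc j + p < length y" "x!(Suc j + p) \<noteq> y!(Suc j + p)"
       "v = (y!(Suc j + p) < x!(Suc j + p))" using p(1-4) by auto
    have p2: "\<forall>q<p. Suc j + q < length x \<and> Suc j + q < length y \<and> x!(Suc j + q) = y!(Suc j + q)"
      using p(1,2,5) by auto
    have "(LEAST r. P r) = Suc p"
    proof (rule Least_equality)
      show "P (Suc p)" unfolding P_iff using p1 by auto
      fix r assume "P r"
      show "Suc p \<le> r"
      proof (rule ccontr)
        assume "\<not> Suc p \<le> r"
        then have "r - 1 < p" "r \<ge> 1" using \<open>P r\<close> P_iff by auto
        then have "j + r = Suc j + (r - 1)" by auto
        then show False using p2 \<open>r - 1 < p\<close> \<open>P r\<close> P_iff by metis
      qed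
    qed
    then show ?thesis using fd Some p1 by auto
  qed
qed

lemma first_diff_sym: "first_diff T i i' j = first_diff T i' i j"
  unfolding first_diff_def by (metis (no_types, opaque_lifting))


definition ST :: "nat list \<Rightarrow> nat list \<Rightarrow> nat \<Rightarrow> bool" where
  "ST x y j = (fdl (drop (Suc j) x) (drop (Suc j) y) = Some True)"

definition cinv :: "nat list \<Rightarrow> nat list \<Rightarrow> nat \<Rightarrow> bool" where
  "cinv x y j = (x!j \<noteq> y!j \<and> (x!j < y!j \<longleftrightarrow> ST x y j))"

lemma inv01: "inv_pair [x,y] (0,j) (1,j) \<longleftrightarrow> j < length x \<and> j < length y \<and> x!j < y!j \<and> ST x y j"
proof -
  obtain p where p: "first_diff [x,y] 0 1 j = Suc p"
    "(case fdl (drop (Suc j) x) (drop (Suc j) y) of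
        None \<Rightarrow> \<not>(Suc j + p < length x \<and> Suc j + p < length y)
      | Some v \<Rightarrow> Suc j + p < length x \<and> Suc j + p < length y \<and>
           x!(Suc j + p) \<noteq> y!(Suc j + p) \<and> v = (y!(Suc j + p) < x!(Suc j + p)))"
    using first_diff_char by blast
  have e: "j + Suc p = Suc j + p" by simp
  show ?thesis
    unfolding inv_pair_def ST_def using p
    by (auto simp: box_ex_def tval_def Let_def e split: option.splits)
qed

lemma inv10: "inv_pair [x,y] (1,j) (0,j) \<longleftrightarrow> j < length x \<and> j < length y \<and> y!j < x!j \<and> \<not> ST x y j"
proof -
  obtain p where p: "first_diff [x,y] 0 1 j = Suc p"
    "(case fdl (drop (Suc j) x) (drop (Suc j) y) of
        None \<Rightarrow> \<not>(Suc j + p < length x \<and> Suc j + p < length y)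
      | Some v \<Rightarrow> Suc j + p < length x \<and> Suc j + p < length y \<and>
           x!(Suc j + p) \<noteq> y!(Suc j + p) \<and> v = (y!(Suc j + p) < x!(Suc j + p)))"
    using first_diff_char by blast
  have p': "first_diff [x,y] 1 0 j = Suc p" using p(1) first_diff_sym by metis
  have e: "j + Suc p = Suc j + p" by simp
  show ?thesis
    unfolding inv_pair_def ST_def using p(2) p'
    by (auto simp: box_ex_def tval_def Let_def e split: option.splits)
qed

lemma inv_pair_shape: "inv_pair [x,y] c c' \<Longrightarrow>
   \<exists>j. (c = (0,j) \<and> c' = (1,j)) \<or> (c = (1,j) \<and> c' = (0,j))"
  unfolding inv_pair_def box_ex_def
  by (auto split: prod.splits simp: less_Suc_eq)

lemma num_inv_char:
  "num_inversions [x,y] = card {j. j < length x \<and> j < length y \<and> cinv x y j}"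
proof -
  define f where "f j = (if x!j < y!j then ((0::nat,j),(1::nat,j)) else ((1,j),(0,j)))" for j
  have "{(c, c'). inv_pair [x,y] c c'} = f ` {j. j < length x \<and> j < length y \<and> cinv x y j}"
  proof (intro equalityI subsetI)
    fix z assume "z \<in> {(c, c'). inv_pair [x,y] c c'}"
    then obtain c c' where z: "z = (c,c')" "inv_pair [x,y] c c'" by auto
    then obtain j where "(c = (0,j) \<and> c' = (1,j)) \<or> (c = (1,j) \<and> c' = (0,j))"
      using inv_pair_shape by blast
    then show "z \<in> f ` {j. j < length x \<and> j < length y \<and> cinv x y j}"
      using z inv01 inv10 unfolding f_def cinv_def
      by (auto intro!: image_eqI[of _ _ j])
  next
    fix z assume "z \<in> f ` {j. j < length x \<and> j < length y \<and> cinv x y j}"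
    then show "z \<in> {(c, c'). inv_pair [x,y] c c'}"
      using inv01 inv10 unfolding f_def cinv_def
      by (auto split: if_splits simp: not_less_iff_gr_or_eq)
  qed
  moreover have "inj f" unfolding f_def inj_def by (auto split: if_splits)
  ultimately show ?thesis unfolding num_inversions_def
    by (simp add: card_image inj_on_subset)
qed


lemma fdl_Nil2[simp]: "fdl xs [] = None"
  by (cases xs) auto

lemma fdl_app_long: "length ys \<le> length xs \<Longrightarrow> fdl (xs@zs) ys = fdl xs ys"
proof (induction xs arbitrary: ys)
  case Nil then show ?case by simp
next
  case (Cons p ps) then show ?case by (cases ys) auto
qed

lemma fdl_double: "\<forall>e\<in>set xs. e < M \<Longrightarrow> \<forall>e\<in>set ys. e < M \<Longrightarrow> length ys \<le> length xs \<Longrightarrow>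
  (fdl (xs@[M]) (ys@[M]) = Some True) = (fdl xs ys = Some True)"
proof (induction xs arbitrary: ys)
  case Nil then show ?case by simp
next
  case (Cons p ps) then show ?case by (cases ys) auto
qed

lemma fdl_bottom: "\<forall>e\<in>set xs. e < M \<Longrightarrow> length ys < length xs \<Longrightarrow>
  (fdl xs (ys@[M]) = Some True) = (fdl xs ys = Some True)"
proof (induction xs arbitrary: ys)
  case Nil then show ?case by simp
next
  case (Cons p ps) then show ?case by (cases ys) auto
qed

lemma fdl_swap: "\<forall>e\<in>set ys. e < M \<Longrightarrow> length xs < length ys \<Longrightarrow>
  (fdl (xs@[M]) ys = Some True) = (fdl ys xs \<noteq> Some True)"
proof (induction xs arbitrary: ys)
  case Nil then show ?case by (cases ys) auto
next
  case (Cons p ps) then show ?case by (cases ys) auto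
qed

definition inv2 :: "nat list \<Rightarrow> nat list \<Rightarrow> nat" where
  "inv2 x y = card {j. j < length x \<and> j < length y \<and> cinv x y j}"

lemma drop_snoc: "Suc j \<le> length xs \<Longrightarrow> drop (Suc j) (xs @ [M]) = drop (Suc j) xs @ [M]"
  by simp

lemma inv2_double:
  assumes "\<forall>e\<in>set x. e < M" "\<forall>e\<in>set y. e < M" "length y \<le> length x"
  shows "inv2 (x@[M]) (y@[M]) = inv2 x y"
proof -
  have "{j. j < length (x@[M]) \<and> j < length (y@[M]) \<and> cinv (x@[M]) (y@[M]) j}
      = {j. j < length x \<and> j < length y \<and> cinv x y j}"
  proof (intro set_eqI iffI)
    fix j assume "j \<in> {j. j < length (x@[M]) \<and> j < length (y@[M]) \<and> cinv (x@[M]) (y@[M]) j}"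
    then have j: "j \<le> length y" "j \<le> length x" "cinv (x@[M]) (y@[M]) j" by auto
    show "j \<in> {j. j < length x \<and> j < length y \<and> cinv x y j}"
    proof (cases "j = length y")
      case True
      show ?thesis
      proof (cases "length x = length y")
        case True then show ?thesis using j \<open>j = length y\<close> by (auto simp: cinv_def nth_append)
      next
        case False
        then have "x!j < M" using assms j True by auto
        moreover have "drop (Suc j) (y@[M]) = []" using True by simp
        ultimately show ?thesis using j True False by (auto simp: cinv_def ST_def nth_append)
      qed
    next
      case False
      then have jl: "j < length y" "j < length x" using j assms(3) by auto
      have "ST (x@[M]) (y@[M]) j = ST x y j"
        unfolding ST_def using jl assms
        by (simp add: fdl_double[of _ M] in_set_dropD)
      then show ?thesis using j jl by (auto simp: cinv_def nth_append)
    qed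
  next
    fix j assume "j \<in> {j. j < length x \<and> j < length y \<and> cinv x y j}"
    then have jl: "j < length y" "j < length x" "cinv x y j" by auto
    have "ST (x@[M]) (y@[M]) j = ST x y j"
      unfolding ST_def using jl assms
      by (simp add: fdl_double[of _ M] in_set_dropD)
    then show "j \<in> {j. j < length (x@[M]) \<and> j < length (y@[M]) \<and> cinv (x@[M]) (y@[M]) j}"
      using jl by (auto simp: cinv_def nth_append)
  qed
  then show ?thesis unfolding inv2_def by simp
qed

lemma inv2_bottom:
  assumes "\<forall>e\<in>set x. e < M" "length y < length x"
  shows "inv2 x (y@[M]) = inv2 x y"
proof -
  have "{j. j < length x \<and> j < length (y@[M]) \<and> cinv x (y@[M]) j}
      = {j. j < length x \<and> j < length y \<and> cinv x y j}"
  proof (intro set_eqI iffI)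
    fix j assume "j \<in> {j. j < length x \<and> j < length (y@[M]) \<and> cinv x (y@[M]) j}"
    then have j: "j \<le> length y" "j < length x" "cinv x (y@[M]) j" by auto
    show "j \<in> {j. j < length x \<and> j < length y \<and> cinv x y j}"
    proof (cases "j = length y")
      case True
      then have "x!j < M" using assms j by auto
      moreover have "drop (Suc j) (y@[M]) = []" using True by simp
      ultimately show ?thesis using j True by (auto simp: cinv_def ST_def nth_append)
    next
      case False
      then have jl: "j < length y" using j by auto
      have "ST x (y@[M]) j = ST x y j"
        unfolding ST_def using jl j assms
        by (simp add: fdl_bottom[of _ M] in_set_dropD)
      then show ?thesis using j jl by (auto simp: cinv_def nth_append)
    qed
  next
    fix j assume "j \<in> {j. j < length x \<and> j < length y \<and> cinv x y j}"
    then have jl: "j < length y" "j < length x" "cinv x y j" by auto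
    have "ST x (y@[M]) j = ST x y j"
      unfolding ST_def using jl assms
      by (simp add: fdl_bottom[of _ M] in_set_dropD)
    then show "j \<in> {j. j < length x \<and> j < length (y@[M]) \<and> cinv x (y@[M]) j}"
      using jl by (auto simp: cinv_def nth_append)
  qed
  then show ?thesis unfolding inv2_def by simp
qed

lemma inv2_top:
  assumes "length y \<le> length x"
  shows "inv2 (x@[M]) y = inv2 x y"
proof -
  have "{j. j < length (x@[M]) \<and> j < length y \<and> cinv (x@[M]) y j}
      = {j. j < length x \<and> j < length y \<and> cinv x y j}"
  proof (intro set_eqI iffI)
    fix j assume "j \<in> {j. j < length (x@[M]) \<and> j < length y \<and> cinv (x@[M]) y j}"
    then have jl: "j < length y" "j < length x" "cinv (x@[M]) y j" using assms by auto
    have "ST (x@[M]) y j = ST x y j"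
      unfolding ST_def using jl assms by (simp add: fdl_app_long)
    then show "j \<in> {j. j < length x \<and> j < length y \<and> cinv x y j}"
      using jl by (auto simp: cinv_def nth_append)
  next
    fix j assume "j \<in> {j. j < length x \<and> j < length y \<and> cinv x y j}"
    then have jl: "j < length y" "j < length x" "cinv x y j" by auto
    have "ST (x@[M]) y j = ST x y j"
      unfolding ST_def using jl assms by (simp add: fdl_app_long)
    then show "j \<in> {j. j < length (x@[M]) \<and> j < length y \<and> cinv (x@[M]) y j}"
      using jl by (auto simp: cinv_def nth_append)
  qed
  then show ?thesis unfolding inv2_def by simp
qed

lemma inv2_swap:
  assumes "\<forall>e\<in>set y. e < M" "length y = Suc (length x)"
  shows "inv2 (x@[M]) y = Suc (inv2 y x)"
proof -
  have "{j. j < length (x@[M]) \<and> j < length y \<and> cinv (x@[M]) y j}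
      = insert (length x) {j. j < length y \<and> j < length x \<and> cinv y x j}"
  proof (intro set_eqI iffI)
    fix j assume "j \<in> {j. j < length (x@[M]) \<and> j < length y \<and> cinv (x@[M]) y j}"
    then have j: "j \<le> length x" "cinv (x@[M]) y j" using assms by auto
    show "j \<in> insert (length x) {j. j < length y \<and> j < length x \<and> cinv y x j}"
    proof (cases "j = length x")
      case True then show ?thesis by simp
    next
      case False
      then have jl: "j < length x" using j by auto
      have "ST (x@[M]) y j = (\<not> ST y x j)"
        unfolding ST_def using jl assms
        by (simp add: fdl_swap[of _ M] in_set_dropD)
      then show ?thesis using j jl assms by (auto simp: cinv_def nth_append)
    qed
  next
    fix j assume "j \<in> insert (length x) {j. j < length y \<and> j < length x \<and> cinv y x j}"
    then consider "j = length x" | "j < length x" "cinv y x j" by auto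
    then show "j \<in> {j. j < length (x@[M]) \<and> j < length y \<and> cinv (x@[M]) y j}"
    proof cases
      case 1
      have "y!j \<in> set y" using assms 1 by simp
      then have hM: "y!(length x) < M" using assms 1 by auto
      have "drop (Suc j) (x@[M]) = []" using 1 by simp
      then have nST: "\<not> ST (x@[M]) y j" unfolding ST_def by simp
      have c: "(x@[M])!j = M" using 1 by simp
      have yj: "y!j < M" using hM 1 by simp
      have "cinv (x@[M]) y j" unfolding cinv_def c using yj nST by auto
      then show ?thesis using 1 assms by simp
    next
      case 2
      have "ST (x@[M]) y j = (\<not> ST y x j)"
        unfolding ST_def using 2 assms
        by (simp add: fdl_swap[of _ M] in_set_dropD)
      then show ?thesis using 2 assms by (auto simp: cinv_def nth_append)
    qed
  qed
  then show ?thesis unfolding inv2_def by simp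
qed




definition hc :: "nat list \<Rightarrow> nat list \<Rightarrow> nat list \<Rightarrow> bool" where
  "hc x y mu \<longleftrightarrow> (\<forall>v. count_list (x@y) v = (if 1 \<le> v \<and> v \<le> length mu then mu ! (v - 1) else 0))"

definition S2 :: "nat \<Rightarrow> nat \<Rightarrow> nat \<Rightarrow> nat list \<Rightarrow> (nat list \<times> nat list) set" where
  "S2 k a b mu = {(x,y). length x = a \<and> length y = b \<and> sorted_wrt (<) x \<and> sorted_wrt (<) y
      \<and> hc x y mu \<and> inv2 x y = k}"

lemma hc_has: "has_content [x,y] mu = hc x y mu"
  by (simp add: has_content_def hc_def)

lemma S_S2: "S k [a,b] mu = (\<lambda>(x,y). [x,y]) ` S2 k a b mu"
proof (intro set_eqI iffI)
  fix T assume "T \<in> S k [a,b] mu"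
  then have T: "map length T = [a,b]" "row_standard T" "has_content T mu" "num_inversions T = k"
    unfolding S_def by auto
  then obtain x y where xy: "T = [x,y]" "length x = a" "length y = b"
    by (cases T; cases "tl T"; auto)
  show "T \<in> (\<lambda>(x,y). [x,y]) ` S2 k a b mu"
    using T xy num_inv_char[of x y]
    by (auto simp: S2_def row_standard_def hc_has inv2_def intro!: image_eqI[of _ _ "(x,y)"])
next
  fix T assume "T \<in> (\<lambda>(x,y). [x,y]) ` S2 k a b mu"
  then obtain x y where "T = [x,y]" "(x,y) \<in> S2 k a b mu" by auto
  then show "T \<in> S k [a,b] mu" using num_inv_char[of x y]
    by (auto simp: S_def S2_def row_standard_def hc_has inv2_def)
qed

lemma card_S_S2: "card (S k [a,b] mu) = card (S2 k a b mu)"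
  unfolding S_S2 by (rule card_image) (auto simp: inj_on_def)

lemma hc_range: "hc x y mu \<Longrightarrow> e \<in> set x \<union> set y \<Longrightarrow> 1 \<le> e \<and> e \<le> length mu"
  unfolding hc_def
  by (metis UnE count_list_0_iff count_list_append add_is_0)

lemma S2_finite: "finite (S2 k a b mu)"
proof -
  let ?A = "{xs. set xs \<subseteq> {..length mu} \<and> length xs \<le> a + b}"
  have "finite ?A" by (rule finite_lists_length_le) simp
  moreover have "S2 k a b mu \<subseteq> ?A \<times> ?A"
    unfolding S2_def using hc_range by fastforce
  ultimately show ?thesis by (meson finite_SigmaI finite_subset)
qed

lemma sorted_count_le1: "sorted_wrt (<) (x::nat list) \<Longrightarrow> count_list x v \<le> 1"
proof (induction x)
  case (Cons p ps)
  then show ?case by (auto simp: count_list_0_iff)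
qed simp

lemma sum_list_12: "set mu \<subseteq> {1,2} \<Longrightarrow> sum_list mu = length mu + length (filter (\<lambda>x. x = 2) mu)"
  by (induction mu) auto

lemma cnt2_le_b:
  assumes "(x,y) \<in> S2 k a b mu"
  shows "length (filter (\<lambda>x. x = 2) mu) \<le> b"
proof -
  have s: "sorted_wrt (<) x" "length y = b" "hc x y mu" using assms unfolding S2_def by auto
  have "length (filter (\<lambda>x. x = 2) mu) = card {i. i < length mu \<and> mu!i = 2}"
    by (simp add: length_filter_conv_card)
  also have "\<dots> \<le> card (set y)"
  proof (rule card_inj_on_le[of Suc])
    show "inj_on Suc {i. i < length mu \<and> mu ! i = 2}" by simp
    show "finite (set y)" by simp
    show "Suc ` {i. i < length mu \<and> mu ! i = 2} \<subseteq> set y"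
    proof
      fix v assume "v \<in> Suc ` {i. i < length mu \<and> mu ! i = 2}"
      then obtain i where i: "v = Suc i" "i < length mu" "mu!i = 2" by auto
      have "count_list (x@y) v = 2" using s(3) i unfolding hc_def by auto
      moreover have "count_list x v \<le> 1" using sorted_count_le1[OF s(1)] .
      ultimately have "count_list y v \<noteq> 0" by simp
      then show "v \<in> set y" by (simp add: count_list_0_iff)
    qed
  qed
  also have "\<dots> \<le> b" using s(2) card_length by metis
  finally show ?thesis .
qed

lemma hc_snoc: "hc x y (mu@[t]) \<longleftrightarrow>
   (\<forall>v. v \<noteq> Suc (length mu) \<longrightarrow> count_list (x@y) v = (if 1 \<le> v \<and> v \<le> length mu then mu ! (v - 1) else 0))
   \<and> count_list (x@y) (Suc (length mu)) = t"
  unfolding hc_def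
  apply (rule iffI)
   apply (auto simp: nth_append)[1]
  apply (intro allI)
  subgoal for v
    by (cases "v = Suc (length mu)") (auto simp: nth_append)
  done

lemma hc_base: "hc x y mu \<longleftrightarrow>
   (\<forall>v. v \<noteq> Suc (length mu) \<longrightarrow> count_list (x@y) v = (if 1 \<le> v \<and> v \<le> length mu then mu ! (v - 1) else 0))
   \<and> count_list (x@y) (Suc (length mu)) = 0"
  unfolding hc_def
  by (metis Suc_n_not_le_n)

lemma last_max:
  assumes "sorted_wrt (<) (x::nat list)" "\<forall>e\<in>set x. e \<le> M" "M \<in> set x"
  shows "x = butlast x @ [M] \<and> (\<forall>e\<in>set (butlast x). e < M)"
proof -
  have ne: "x \<noteq> []" using assms(3) by auto
  then have x: "x = butlast x @ [last x]" by simp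
  have lt: "\<forall>e\<in>set (butlast x). e < last x"
    using assms(1) x sorted_wrt_append[of "(<)" "butlast x" "[last x]"] by (metis list.set_intros(1))
  have "last x \<le> M" using assms(2) ne by simp
  moreover have "M = last x"
  proof (rule ccontr)
    assume "M \<noteq> last x"
    then have "M \<in> set (butlast x)" using assms(3) x by (metis in_set_butlast_appendI rotate1.simps(2) set_ConsD set_rotate1)
    then show False using lt \<open>last x \<le> M\<close> by fastforce
  qed
  ultimately show ?thesis using x lt by auto
qed

lemma sorted_snoc: "sorted_wrt (<) (x @ [M]) \<longleftrightarrow> sorted_wrt (<) x \<and> (\<forall>e\<in>set x. e < (M::nat))"
  by (simp add: sorted_wrt_append)




lemma S2_mem: "(x,y) \<in> S2 k a b mu \<longleftrightarrow> length x = a \<and> length y = b \<and> sorted_wrt (<) x \<and> sorted_wrt (<) y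
      \<and> hc x y mu \<and> inv2 x y = k"
  unfolding S2_def by simp

lemma bound_M: "hc x y (mu@[t]) \<Longrightarrow> \<forall>e\<in>set x. e \<le> Suc (length mu)"
   "hc x y (mu@[t]) \<Longrightarrow> \<forall>e\<in>set y. e \<le> Suc (length mu)"
  using hc_range[of x y "mu@[t]"] by auto

lemma bound_lt0: "hc x y mu \<Longrightarrow> e \<in> set x \<union> set y \<Longrightarrow> e < Suc (length mu)"
  using hc_range[of x y mu e] by auto

lemma bound_lt: "hc x y mu \<Longrightarrow> \<forall>e\<in>set x. e < Suc (length mu)"
   "hc x y mu \<Longrightarrow> \<forall>e\<in>set y. e < Suc (length mu)"
  using bound_lt0[of x y mu] by blast+

lemma count_lt: "\<forall>e\<in>set x. e < (M::nat) \<Longrightarrow> count_list x M = 0"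
  by (induction x) auto

lemma card_case2:
  assumes "1 \<le> b" "b \<le> a"
  shows "card (S2 k a b (mu@[2])) = card (S2 k (a-1) (b-1) mu)"
proof -
  define M where "M = Suc (length mu)"
  define f where "f = (\<lambda>(x::nat list,y::nat list). (butlast x, butlast y))"
  define g where "g = (\<lambda>(x::nat list,y::nat list). (x@[M], y@[M]))"
  have A: "x = butlast x @ [M] \<and> (\<forall>e\<in>set (butlast x). e < M) \<and>
           y = butlast y @ [M] \<and> (\<forall>e\<in>set (butlast y). e < M)"
    if "(x,y) \<in> S2 k a b (mu@[2])" for x y
  proof -
    have h: "sorted_wrt (<) x" "sorted_wrt (<) y" "hc x y (mu@[2])" using that S2_mem by auto
    have c: "count_list (x@y) M = 2" using h(3) hc_snoc M_def by auto
    have "count_list x M \<le> 1" "count_list y M \<le> 1" using sorted_count_le1 h by auto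
    then have "count_list x M \<noteq> 0" "count_list y M \<noteq> 0" using c by auto
    then have "M \<in> set x" "M \<in> set y" by (auto simp: count_list_0_iff)
    then show ?thesis using last_max h bound_M[OF h(3)] M_def by metis
  qed
  have "bij_betw f (S2 k a b (mu@[2])) (S2 k (a-1) (b-1) mu)"
  proof (rule bij_betw_byWitness[where f'=g])
    show "\<forall>z\<in>S2 k a b (mu@[2]). g (f z) = z"
      using A unfolding f_def g_def by auto
    show "\<forall>z\<in>S2 k (a-1) (b-1) mu. f (g z) = z"
      unfolding f_def g_def by auto
    show "f ` S2 k a b (mu@[2]) \<subseteq> S2 k (a-1) (b-1) mu"
    proof
      fix z assume "z \<in> f ` S2 k a b (mu@[2])"
      then obtain x y where z: "z = (butlast x, butlast y)" "(x,y) \<in> S2 k a b (mu@[2])"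
        unfolding f_def by auto
      note h = z(2)[unfolded S2_mem]
      note AA = A[OF z(2)]
      define x' where "x' = butlast x"
      define y' where "y' = butlast y"
      have xe: "x = x'@[M]" "y = y'@[M]" using AA x'_def y'_def by auto
      have lt: "\<forall>e\<in>set x'. e < M" "\<forall>e\<in>set y'. e < M" using AA x'_def y'_def by auto
      have "length x' = a - 1" "length y' = b - 1" using h xe by auto
      moreover have "sorted_wrt (<) x'" "sorted_wrt (<) y'" using h xe sorted_snoc by auto
      moreover have "hc x' y' mu"
        unfolding hc_base
      proof (intro conjI allI impI)
        fix v assume "v \<noteq> Suc (length mu)"
        then have "count_list (x'@y') v = count_list (x@y) v" using xe M_def by auto
        then show "count_list (x'@y') v = (if 1 \<le> v \<and> v \<le> length mu then mu ! (v - 1) else 0)"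
          using h \<open>v \<noteq> Suc (length mu)\<close> unfolding hc_snoc by auto
      next
        show "count_list (x'@y') (Suc (length mu)) = 0" using count_lt[OF lt(1)] count_lt[OF lt(2)] M_def by simp
      qed
      moreover have "inv2 x' y' = k"
        using inv2_double[OF lt] h xe \<open>length x' = a - 1\<close> \<open>length y' = b - 1\<close> assms by auto
      ultimately show "z \<in> S2 k (a-1) (b-1) mu" using z(1) x'_def y'_def S2_mem by auto
    qed
    show "g ` S2 k (a-1) (b-1) mu \<subseteq> S2 k a b (mu@[2])"
    proof
      fix z assume "z \<in> g ` S2 k (a-1) (b-1) mu"
      then obtain x' y' where z: "z = (x'@[M], y'@[M])" "(x',y') \<in> S2 k (a-1) (b-1) mu"
        unfolding g_def by auto
      note h = z(2)[unfolded S2_mem]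
      have lt: "\<forall>e\<in>set x'. e < M" "\<forall>e\<in>set y'. e < M" using bound_lt h M_def by auto
      have "length (x'@[M]) = a" "length (y'@[M]) = b" using h assms by auto
      moreover have "sorted_wrt (<) (x'@[M])" "sorted_wrt (<) (y'@[M])" using h lt sorted_snoc by auto
      moreover have "hc (x'@[M]) (y'@[M]) (mu@[2])"
        unfolding hc_snoc
      proof (intro conjI allI impI)
        fix v assume "v \<noteq> Suc (length mu)"
        then have "count_list (x'@[M]@y'@[M]) v = count_list (x'@y') v" using M_def by auto
        then show "count_list ((x'@[M])@(y'@[M])) v = (if 1 \<le> v \<and> v \<le> length mu then mu ! (v - 1) else 0)"
          using h \<open>v \<noteq> Suc (length mu)\<close> unfolding hc_base by auto
      next
        show "count_list ((x'@[M])@(y'@[M])) (Suc (length mu)) = 2" using count_lt[OF lt(1)] count_lt[OF lt(2)] M_def by simp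
      qed
      moreover have "inv2 (x'@[M]) (y'@[M]) = k"
        using inv2_double[OF lt] h assms by auto
      ultimately show "z \<in> S2 k a b (mu@[2])" using z(1) S2_mem by auto
    qed
  qed
  then show ?thesis by (rule bij_betw_same_card)
qed





lemma hc_comm: "hc x y mu = hc y x mu"
  unfolding hc_def by (simp add: add.commute)

lemma hc_add1:
  assumes "\<forall>e\<in>set x. e < M" "\<forall>e\<in>set y. e < M" "M = Suc (length mu)"
  shows "hc (x@[M]) y (mu@[1]) \<longleftrightarrow> hc x y mu"
proof -
  have c: "count_list (x@y) M = 0" using count_lt[OF assms(1)] count_lt[OF assms(2)] by simp
  have pw: "\<forall>v. v \<noteq> M \<longrightarrow> count_list ((x@[M])@y) v = count_list (x@y) v" by auto
  have e1: "count_list ((x@[M])@y) M = 1" using c by simp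
  have eq: "(\<forall>v. v \<noteq> M \<longrightarrow> count_list ((x@[M])@y) v = s v) \<longleftrightarrow> (\<forall>v. v \<noteq> M \<longrightarrow> count_list (x@y) v = s v)" for s
    using pw by metis
  have A: "hc (x@[M]) y (mu@[1]) \<longleftrightarrow> (\<forall>v. v \<noteq> M \<longrightarrow> count_list ((x@[M])@y) v = (if 1 \<le> v \<and> v \<le> length mu then mu ! (v - 1) else 0)) \<and> count_list ((x@[M])@y) M = 1"
    using hc_snoc[of "x@[M]" y mu 1] assms(3) by simp
  have B: "hc x y mu \<longleftrightarrow> (\<forall>v. v \<noteq> M \<longrightarrow> count_list (x@y) v = (if 1 \<le> v \<and> v \<le> length mu then mu ! (v - 1) else 0)) \<and> count_list (x@y) M = 0"
    using hc_base[of x y mu] assms(3) by simp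
  show ?thesis unfolding A B eq using e1 c by simp
qed

lemma memA:
  assumes "(x,y) \<in> S2 k a b (mu@[1])" "M = Suc (length mu)" "M \<in> set x"
  shows "x = butlast x @ [M] \<and> (\<forall>e\<in>set (butlast x). e < M) \<and> (\<forall>e\<in>set y. e < M)"
proof -
  have h: "sorted_wrt (<) x" "sorted_wrt (<) y" "hc x y (mu@[1])" using assms S2_mem by auto
  have c: "count_list (x@y) M = 1" using h(3) hc_snoc assms(2) by auto
  have "count_list x M \<noteq> 0" using assms(3) by (simp add: count_list_0_iff)
  then have "count_list y M = 0" using c by simp
  then have "M \<notin> set y" by (simp add: count_list_0_iff)
  then have yl: "\<forall>e\<in>set y. e < M" using bound_M(2)[OF h(3)] assms(2) le_neq_implies_less by blast
  have xb: "\<forall>e\<in>set x. e \<le> M" using bound_M(1)[OF h(3)] assms(2) by simp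
  show ?thesis using last_max[OF h(1) xb assms(3)] yl by blast
qed

lemma memB:
  assumes "(x,y) \<in> S2 k a b (mu@[1])" "M = Suc (length mu)" "M \<in> set y"
  shows "y = butlast y @ [M] \<and> (\<forall>e\<in>set (butlast y). e < M) \<and> (\<forall>e\<in>set x. e < M)"
proof -
  have h: "sorted_wrt (<) x" "sorted_wrt (<) y" "hc x y (mu@[1])" using assms S2_mem by auto
  have c: "count_list (x@y) M = 1" using h(3) hc_snoc assms(2) by auto
  have "count_list y M \<noteq> 0" using assms(3) by (simp add: count_list_0_iff)
  then have "count_list x M = 0" using c by simp
  then have "M \<notin> set x" by (simp add: count_list_0_iff)
  then have xl: "\<forall>e\<in>set x. e < M" using bound_M(1)[OF h(3)] assms(2) le_neq_implies_less by blast
  have yb: "\<forall>e\<in>set y. e \<le> M" using bound_M(2)[OF h(3)] assms(2) by simp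
  show ?thesis using last_max[OF h(2) yb assms(3)] xl by blast
qed

lemma case1_split:
  "card (S2 k a b (mu@[1])) = card {z \<in> S2 k a b (mu@[1]). Suc (length mu) \<in> set (fst z)}
     + card {z \<in> S2 k a b (mu@[1]). Suc (length mu) \<in> set (snd z)}"
proof -
  let ?M = "Suc (length mu)"
  have "S2 k a b (mu@[1]) = {z \<in> S2 k a b (mu@[1]). ?M \<in> set (fst z)} \<union> {z \<in> S2 k a b (mu@[1]). ?M \<in> set (snd z)}"
  proof (intro set_eqI iffI)
    fix z assume z: "z \<in> S2 k a b (mu@[1])"
    obtain x y where "z = (x,y)" by (cases z)
    then have "hc x y (mu@[1])" using z S2_mem by auto
    then have "count_list (x@y) ?M = 1" using hc_snoc by auto
    then have "?M \<in> set x \<or> ?M \<in> set y" by (metis UnE count_list_0_iff set_append zero_neq_one)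
    then show "z \<in> {z \<in> S2 k a b (mu@[1]). ?M \<in> set (fst z)} \<union> {z \<in> S2 k a b (mu@[1]). ?M \<in> set (snd z)}"
      using z \<open>z = (x,y)\<close> by auto
  qed auto
  moreover have "{z \<in> S2 k a b (mu@[1]). ?M \<in> set (fst z)} \<inter> {z \<in> S2 k a b (mu@[1]). ?M \<in> set (snd z)} = {}"
    using memA by fastforce
  ultimately show ?thesis
    by (metis (no_types, lifting) S2_finite card_Un_disjoint finite_Un)
qed

lemma card_caseB:
  assumes "1 \<le> b" "b \<le> a"
  shows "card {z \<in> S2 k a b (mu@[1]). Suc (length mu) \<in> set (snd z)} = card (S2 k a (b-1) mu)"
proof -
  define M where "M = Suc (length mu)"
  define f where "f = (\<lambda>(x::nat list,y::nat list). (x, butlast y))"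
  define g where "g = (\<lambda>(x::nat list,y::nat list). (x, y@[M]))"
  have "bij_betw f {z \<in> S2 k a b (mu@[1]). M \<in> set (snd z)} (S2 k a (b-1) mu)"
  proof (rule bij_betw_byWitness[where f'=g])
    show "\<forall>z\<in>{z \<in> S2 k a b (mu@[1]). M \<in> set (snd z)}. g (f z) = z"
      using memB M_def unfolding f_def g_def by force
    show "\<forall>z\<in>S2 k a (b-1) mu. f (g z) = z"
      unfolding f_def g_def by auto
    show "f ` {z \<in> S2 k a b (mu@[1]). M \<in> set (snd z)} \<subseteq> S2 k a (b-1) mu"
    proof
      fix z assume "z \<in> f ` {z \<in> S2 k a b (mu@[1]). M \<in> set (snd z)}"
      then obtain x y where z: "z = (x, butlast y)" "(x,y) \<in> S2 k a b (mu@[1])" "M \<in> set y"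
        unfolding f_def by auto
      note h = z(2)[unfolded S2_mem]
      define y' where "y' = butlast y"
      have AA: "y = y'@[M]" "\<forall>e\<in>set y'. e < M" "\<forall>e\<in>set x. e < M"
        using memB[OF z(2) M_def z(3)] y'_def by auto
      have "length y' = b - 1" using h AA by auto
      moreover have "sorted_wrt (<) y'" using h AA sorted_snoc by auto
      moreover have "hc x y' mu"
        using h AA hc_add1[of y' M x mu] hc_comm M_def by metis
      moreover have "inv2 x y' = k"
        using inv2_bottom[OF AA(3)] h AA \<open>length y' = b - 1\<close> assms by auto
      ultimately show "z \<in> S2 k a (b-1) mu" using z(1) y'_def h S2_mem by auto
    qed
    show "g ` S2 k a (b-1) mu \<subseteq> {z \<in> S2 k a b (mu@[1]). M \<in> set (snd z)}"
    proof
      fix z assume "z \<in> g ` S2 k a (b-1) mu"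
      then obtain x y' where z: "z = (x, y'@[M])" "(x,y') \<in> S2 k a (b-1) mu"
        unfolding g_def by auto
      note h = z(2)[unfolded S2_mem]
      have lt: "\<forall>e\<in>set x. e < M" "\<forall>e\<in>set y'. e < M" using bound_lt h M_def by auto
      have "length (y'@[M]) = b" using h assms by auto
      moreover have "sorted_wrt (<) (y'@[M])" using h lt sorted_snoc by auto
      moreover have "hc x (y'@[M]) (mu@[1])"
        using h lt hc_add1[of y' M x mu] hc_comm M_def by metis
      moreover have "inv2 x (y'@[M]) = k"
        using inv2_bottom[OF lt(1)] h assms by auto
      ultimately show "z \<in> {z \<in> S2 k a b (mu@[1]). M \<in> set (snd z)}" using z(1) h S2_mem by auto
    qed
  qed
  then show ?thesis using bij_betw_same_card M_def by blast
qed

lemma card_caseA_gt: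
  assumes "b < a"
  shows "card {z \<in> S2 k a b (mu@[1]). Suc (length mu) \<in> set (fst z)} = card (S2 k (a-1) b mu)"
proof -
  define M where "M = Suc (length mu)"
  define f where "f = (\<lambda>(x::nat list,y::nat list). (butlast x, y))"
  define g where "g = (\<lambda>(x::nat list,y::nat list). (x@[M], y))"
  have "bij_betw f {z \<in> S2 k a b (mu@[1]). M \<in> set (fst z)} (S2 k (a-1) b mu)"
  proof (rule bij_betw_byWitness[where f'=g])
    show "\<forall>z\<in>{z \<in> S2 k a b (mu@[1]). M \<in> set (fst z)}. g (f z) = z"
      using memA M_def unfolding f_def g_def by force
    show "\<forall>z\<in>S2 k (a-1) b mu. f (g z) = z"
      unfolding f_def g_def by auto
    show "f ` {z \<in> S2 k a b (mu@[1]). M \<in> set (fst z)} \<subseteq> S2 k (a-1) b mu"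
    proof
      fix z assume "z \<in> f ` {z \<in> S2 k a b (mu@[1]). M \<in> set (fst z)}"
      then obtain x y where z: "z = (butlast x, y)" "(x,y) \<in> S2 k a b (mu@[1])" "M \<in> set x"
        unfolding f_def by auto
      note h = z(2)[unfolded S2_mem]
      define x' where "x' = butlast x"
      have AA: "x = x'@[M]" "\<forall>e\<in>set x'. e < M" "\<forall>e\<in>set y. e < M"
        using memA[OF z(2) M_def z(3)] x'_def by auto
      have "length x' = a - 1" using h AA by auto
      moreover have "sorted_wrt (<) x'" using h AA sorted_snoc by auto
      moreover have "hc x' y mu"
        using h AA hc_add1[of x' M y mu] M_def by metis
      moreover have "inv2 x' y = k"
        using inv2_top[of y x' M] h AA \<open>length x' = a - 1\<close> assms by auto
      ultimately show "z \<in> S2 k (a-1) b mu" using z(1) x'_def h S2_mem by auto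
    qed
    show "g ` S2 k (a-1) b mu \<subseteq> {z \<in> S2 k a b (mu@[1]). M \<in> set (fst z)}"
    proof
      fix z assume "z \<in> g ` S2 k (a-1) b mu"
      then obtain x' y where z: "z = (x'@[M], y)" "(x',y) \<in> S2 k (a-1) b mu"
        unfolding g_def by auto
      note h = z(2)[unfolded S2_mem]
      have lt: "\<forall>e\<in>set x'. e < M" "\<forall>e\<in>set y. e < M" using bound_lt h M_def by auto
      have "length (x'@[M]) = a" using h assms by auto
      moreover have "sorted_wrt (<) (x'@[M])" using h lt sorted_snoc by auto
      moreover have "hc (x'@[M]) y (mu@[1])"
        using h lt hc_add1[of x' M y mu] M_def by metis
      moreover have "inv2 (x'@[M]) y = k"
        using inv2_top[of y x' M] h assms by auto
      ultimately show "z \<in> {z \<in> S2 k a b (mu@[1]). M \<in> set (fst z)}" using z(1) h S2_mem by auto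
    qed
  qed
  then show ?thesis using bij_betw_same_card M_def by blast
qed

lemma card_caseA_eq:
  assumes "1 \<le> a"
  shows "card {z \<in> S2 k a a (mu@[1]). Suc (length mu) \<in> set (fst z)} =
     (if k = 0 then 0 else card (S2 (k-1) a (a-1) mu))"
proof -
  define M where "M = Suc (length mu)"
  define f where "f = (\<lambda>(x::nat list,y::nat list). (y, butlast x))"
  define g where "g = (\<lambda>(x::nat list,y::nat list). (y@[M], x))"
  have key: "inv2 x y = Suc (inv2 y (butlast x)) \<and> x = butlast x @ [M] \<and>
     (\<forall>e\<in>set (butlast x). e < M) \<and> (\<forall>e\<in>set y. e < M)"
    if "(x,y) \<in> S2 k a a (mu@[1])" "M \<in> set x" for x y
  proof -
    note h = that(1)[unfolded S2_mem]
    have AA: "x = butlast x @ [M]" "\<forall>e\<in>set (butlast x). e < M" "\<forall>e\<in>set y. e < M"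
      using memA[OF that(1) M_def that(2)] by auto
    have "length y = Suc (length (butlast x))" using h assms by auto
    then have "inv2 (butlast x @ [M]) y = Suc (inv2 y (butlast x))" using inv2_swap AA(3) by blast
    then show ?thesis using AA by metis
  qed
  show ?thesis
  proof (cases "k = 0")
    case True
    have "{z \<in> S2 k a a (mu@[1]). M \<in> set (fst z)} = {}"
    proof (rule ccontr)
      assume "{z \<in> S2 k a a (mu@[1]). M \<in> set (fst z)} \<noteq> {}"
      then obtain x y where "(x,y) \<in> S2 k a a (mu@[1])" "M \<in> set x" by auto
      then show False using key[of x y] True S2_mem by auto
    qed
    then have E: "{z \<in> S2 k a a (mu@[1]). Suc (length mu) \<in> set (fst z)} = {}" unfolding M_def .
    show ?thesis unfolding E using True by simp
  next
    case False
  have "bij_betw f {z \<in> S2 k a a (mu@[1]). M \<in> set (fst z)} (S2 (k-1) a (a-1) mu)"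
  proof (rule bij_betw_byWitness[where f'=g])
    show "\<forall>z\<in>{z \<in> S2 k a a (mu@[1]). M \<in> set (fst z)}. g (f z) = z"
      using key unfolding f_def g_def by force
    show "\<forall>z\<in>S2 (k-1) a (a-1) mu. f (g z) = z"
      unfolding f_def g_def by auto
    show "f ` {z \<in> S2 k a a (mu@[1]). M \<in> set (fst z)} \<subseteq> S2 (k-1) a (a-1) mu"
    proof
      fix z assume "z \<in> f ` {z \<in> S2 k a a (mu@[1]). M \<in> set (fst z)}"
      then obtain x y where z: "z = (y, butlast x)" "(x,y) \<in> S2 k a a (mu@[1])" "M \<in> set x"
        unfolding f_def by auto
      note h = z(2)[unfolded S2_mem]
      define x' where "x' = butlast x"
      have AA: "x = x'@[M]" "\<forall>e\<in>set x'. e < M" "\<forall>e\<in>set y. e < M" "inv2 x y = Suc (inv2 y x')"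
        using key[OF z(2,3)] x'_def by auto
      have "length x' = a - 1" using h AA by auto
      moreover have "sorted_wrt (<) x'" using h AA sorted_snoc by auto
      moreover have "hc y x' mu"
        using h AA hc_add1[of x' M y mu] hc_comm M_def by metis
      moreover have "inv2 y x' = k - 1" using AA h by auto
      ultimately show "z \<in> S2 (k-1) a (a-1) mu" using z(1) x'_def h S2_mem by auto
    qed
    show "g ` S2 (k-1) a (a-1) mu \<subseteq> {z \<in> S2 k a a (mu@[1]). M \<in> set (fst z)}"
    proof
      fix z assume "z \<in> g ` S2 (k-1) a (a-1) mu"
      then obtain y x' where z: "z = (x'@[M], y)" "(y,x') \<in> S2 (k-1) a (a-1) mu"
        unfolding g_def by auto
      note h = z(2)[unfolded S2_mem]
      have lt: "\<forall>e\<in>set y. e < M" "\<forall>e\<in>set x'. e < M" using bound_lt h M_def by auto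
      have "length (x'@[M]) = a" using h assms by auto
      moreover have "sorted_wrt (<) (x'@[M])" using h lt sorted_snoc by auto
      moreover have "hc (x'@[M]) y (mu@[1])"
        using h lt hc_add1[of x' M y mu] hc_comm M_def by metis
      moreover have "inv2 (x'@[M]) y = k"
        using inv2_swap[of y M x'] lt h assms False by auto
      ultimately show "z \<in> {z \<in> S2 k a a (mu@[1]). M \<in> set (fst z)}" using z(1) h S2_mem by auto
    qed
  qed
  then show ?thesis using bij_betw_same_card M_def False by auto
  qed
qed




definition Cz :: "nat \<Rightarrow> int \<Rightarrow> int" where
  "Cz n c = (if c < 0 then 0 else int (n choose nat c))"

definition G :: "nat \<Rightarrow> int \<Rightarrow> int" where
  "G n c = Cz n c - Cz n (c - 1)"

definition Fm :: "nat \<Rightarrow> nat \<Rightarrow> nat \<Rightarrow> nat \<Rightarrow> int" where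
  "Fm a b m k = (if b < m + k then 0 else G (a + b - 2*m) (int b - int m - int k))"

lemma Cz_pascal: "Cz (Suc n) c = Cz n c + Cz n (c - 1)"
proof (cases "c < 0")
  case True then show ?thesis by (simp add: Cz_def)
next
  case False
  show ?thesis
  proof (cases "c = 0")
    case True then show ?thesis by (simp add: Cz_def)
  next
    case False
    then have "nat c = Suc (nat (c - 1))" using \<open>\<not> c < 0\<close> by auto
    then show ?thesis using \<open>\<not> c < 0\<close> False by (simp add: Cz_def)
  qed
qed

lemma G_pascal: "G (Suc n) c = G n c + G n (c - 1)"
  unfolding G_def using Cz_pascal[of n c] Cz_pascal[of n "c-1"] by simp

lemma G_neg: "c < 0 \<Longrightarrow> G n c = 0"
  unfolding G_def Cz_def by simp

lemma G_mid: "1 \<le> p \<Longrightarrow> G (2*p - 1) (int p) = 0"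
proof -
  assume p: "1 \<le> p"
  have "(2*p - 1) choose p = (2*p - 1) choose (2*p - 1 - p)"
    by (rule binomial_symmetric) (use p in auto)
  moreover have "2*p - 1 - p = p - 1" by simp
  moreover have "nat (int p - 1) = p - 1" using p by auto
  ultimately show ?thesis unfolding G_def Cz_def using p by simp
qed

lemma Fm_t2:
  assumes "1 \<le> b" "1 \<le> m" "b \<le> a" "m \<le> b"
  shows "Fm (a-1) (b-1) (m-1) k = Fm a b m k"
proof -
  have e: "a - 1 + (b - 1) - 2 * (m - 1) = a + b - 2*m" using assms by auto
  have e2: "int (b - 1) - int (m - 1) = int b - int m" using assms by auto
  show ?thesis unfolding Fm_def e e2 using assms by auto
qed

lemma Fm_gt:
  assumes "b < a" "1 \<le> b" "m \<le> b"
  shows "Fm a b m k = Fm (a-1) b m k + Fm a (b-1) m k"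
proof (cases "b < m + k")
  case True then show ?thesis unfolding Fm_def by auto
next
  case False
  define n where "n = a + b - 2*m - 1"
  have n: "a + b - 2*m = Suc n" "a - 1 + b - 2*m = n" using assms n_def by auto
  have "Fm a b m k = G (Suc n) (int b - int m - int k)" using False n unfolding Fm_def by simp
  moreover have "Fm (a-1) b m k = G n (int b - int m - int k)" unfolding Fm_def n(2) using False by simp
  moreover have "Fm a (b-1) m k = G n (int b - int m - int k - 1)"
  proof (cases "b - 1 < m + k")
    case True
    then have "int b - int m - int k - 1 < 0" using False by auto
    then show ?thesis using True G_neg unfolding Fm_def by simp
  next
    case False
    have "a + (b - 1) - 2*m = n" using n assms by auto
    then show ?thesis using False assms unfolding Fm_def by (simp add: of_nat_diff algebra_simps)
  qed
  ultimately show ?thesis using G_pascal by simp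
qed

lemma Fm_b0: "Fm a 0 0 k = Fm (a-1) 0 0 k"
  unfolding Fm_def G_def Cz_def by simp

lemma Fm_eq:
  assumes "m < a"
  shows "Fm a a m k = Fm a (a-1) m k + (if k = 0 then 0 else Fm a (a-1) m (k-1))"
proof (cases "a < m + k")
  case True then show ?thesis unfolding Fm_def using assms by auto
next
  case False
  define n where "n = 2*a - 2*m - 1"
  have n: "a + a - 2*m = Suc n" "a + (a - 1) - 2*m = n" using assms n_def by auto
  have L: "Fm a a m k = G (Suc n) (int a - int m - int k)" using False n unfolding Fm_def by simp
  have R1: "Fm a (a-1) m k = G n (int a - int m - int k - 1)"
  proof (cases "a - 1 < m + k")
    case True
    then have "int a - int m - int k - 1 < 0" using False by auto
    then show ?thesis using True G_neg unfolding Fm_def by simp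
  next
    case False
    then show ?thesis using n assms unfolding Fm_def by (simp add: of_nat_diff algebra_simps)
  qed
  show ?thesis
  proof (cases "k = 0")
    case True
    have "G n (int a - int m) = 0"
    proof -
      have "n = 2*(a-m) - 1" using n_def by auto
      moreover have "int a - int m = int (a - m)" using assms by auto
      ultimately show ?thesis using G_mid[of "a-m"] assms by simp
    qed
    then show ?thesis using L R1 G_pascal[of n "int a - int m"] True by simp
  next
    case False
    have c1: "\<not> a - 1 < m + (k - 1)" using \<open>\<not> a < m + k\<close> False by auto
    have c2: "int (a-1) - int m - int (k-1) = int a - int m - int k" using False assms by auto
    have R2: "Fm a (a-1) m (k-1) = G n (int a - int m - int k)"
      unfolding Fm_def n(2) c2 using c1 by simp
    show ?thesis using L R1 R2 G_pascal False by simp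
  qed
qed




abbreviation cnt2 :: "nat list \<Rightarrow> nat" where
  "cnt2 mu \<equiv> length (filter (\<lambda>x. x = 2) mu)"

lemma S2_base: "S2 k 0 0 [] = (if k = 0 then {([],[])} else {})"
proof -
  have hc0: "hc [] [] []" unfolding hc_def by simp
  have i0: "inv2 [] [] = 0" unfolding inv2_def by simp
  show ?thesis unfolding S2_def using hc0 i0 by auto
qed

lemma main_count:
  "\<forall>a b k. b \<le> a \<longrightarrow> sum_list mu = a + b \<longrightarrow> set mu \<subseteq> {1,2} \<longrightarrow>
     int (card (S2 k a b mu)) = Fm a b (cnt2 mu) k"
proof (induction mu rule: rev_induct)
  case Nil
  show ?case
  proof (intro allI impI)
    fix a b k :: nat
    assume "b \<le> a" "sum_list [] = a + b" "set [] \<subseteq> {1::nat,2}"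
    then have "a = 0" "b = 0" by auto
    then show "int (card (S2 k a b [])) = Fm a b (cnt2 []) k"
      unfolding Fm_def G_def Cz_def by (simp add: S2_base)
  qed
next
  case (snoc t mu)
  show ?case
  proof (intro allI impI)
    fix a b k :: nat
    assume ab: "b \<le> a" and sm: "sum_list (mu@[t]) = a + b" and st: "set (mu@[t]) \<subseteq> {1,2}"
    have smu: "set mu \<subseteq> {1,2}" using st by auto
    have IH: "\<And>a b k. b \<le> a \<Longrightarrow> sum_list mu = a + b \<Longrightarrow> int (card (S2 k a b mu)) = Fm a b (cnt2 mu) k"
      using snoc smu by blast
    have t12: "t = 1 \<or> t = 2" using st by auto
    show "int (card (S2 k a b (mu@[t]))) = Fm a b (cnt2 (mu@[t])) k"
    proof (cases "b < cnt2 (mu@[t])")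
      case True
      then have "S2 k a b (mu@[t]) = {}" using cnt2_le_b by fastforce
      then show ?thesis using True unfolding Fm_def by simp
    next
      case False
      then have mb: "cnt2 (mu@[t]) \<le> b" by simp
      show ?thesis
      proof (cases "t = 2")
        case True
        have m: "cnt2 (mu@[t]) = Suc (cnt2 mu)" using True by simp
        have b1: "1 \<le> b" using mb m by simp
        have smu2: "sum_list mu + 2 = a + b" using sm True by simp
        have "card (S2 k a b (mu@[t])) = card (S2 k (a-1) (b-1) mu)"
          using card_case2[OF b1 ab] True by simp
        moreover have "int (card (S2 k (a-1) (b-1) mu)) = Fm (a-1) (b-1) (cnt2 mu) k"
          using IH[of "b-1" "a-1" k] ab b1 smu2 by simp
        moreover have "Fm (a-1) (b-1) (cnt2 mu) k = Fm a b (cnt2 (mu@[t])) k"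
          using Fm_t2[of b "Suc (cnt2 mu)" a k] b1 ab mb m by simp
        ultimately show ?thesis by simp
      next
        case False
        then have t1: "t = 1" using t12 by simp
        have m: "cnt2 (mu@[t]) = cnt2 mu" using t1 by simp
        have smu1: "sum_list mu + 1 = a + b" using sm t1 by simp
        let ?A = "{z \<in> S2 k a b (mu@[1]). Suc (length mu) \<in> set (fst z)}"
        let ?B = "{z \<in> S2 k a b (mu@[1]). Suc (length mu) \<in> set (snd z)}"
        have split: "card (S2 k a b (mu@[t])) = card ?A + card ?B" using case1_split t1 by simp
        have a1: "1 \<le> a" using smu1 ab by auto
        show ?thesis
        proof (cases "b = 0")
          case True
          have hB: "?B = {}" using True S2_mem by auto
          have cB: "card ?B = 0" by (simp only: hB card.empty)
          have m0: "cnt2 mu = 0" using mb m True by simp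
          have "card ?A = card (S2 k (a-1) b mu)" using card_caseA_gt[of b a k mu] True a1 by simp
          moreover have "int (card (S2 k (a-1) b mu)) = Fm (a-1) b (cnt2 mu) k"
            using IH[of b "a-1" k] True smu1 by simp
          ultimately show ?thesis using split cB m m0 True Fm_b0 by simp
        next
          case False
          then have b1: "1 \<le> b" by simp
          have cB: "int (card ?B) = Fm a (b-1) (cnt2 mu) k"
            using card_caseB[OF b1 ab, of k mu] IH[of "b-1" a k] ab b1 smu1 by simp
          show ?thesis
          proof (cases "b < a")
            case True
            have cA: "int (card ?A) = Fm (a-1) b (cnt2 mu) k"
              using card_caseA_gt[OF True, of k mu] IH[of b "a-1" k] True smu1 by simp
            show ?thesis using split cA cB m Fm_gt[OF True b1, of "cnt2 mu" k] mb t1 by simp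
          next
            case False
            then have ba: "b = a" using ab by simp
            have ltm: "cnt2 mu < a"
            proof -
              have e: "length mu + 1 + cnt2 mu = a + a" using sum_list_12[OF st] sm ba t1 by simp
              have "cnt2 mu \<le> length mu" by (rule length_filter_le)
              then show ?thesis using e by linarith
            qed
            have cA: "int (card ?A) = (if k = 0 then 0 else Fm a (a-1) (cnt2 mu) (k-1))"
              using card_caseA_eq[OF a1, of k mu] IH[of "a-1" a "k-1"] ba smu1 by simp
            show ?thesis using split cA cB m Fm_eq[OF ltm, of k] ba t1 by simp
          qed
        qed
      qed
    qed
  qed
qed

lemma Fm_real:
  assumes "b \<le> a"
  shows "real_of_int (Fm a b m k) =
           (if b < k + m then 0
            else (real a - real b + 1 + 2 * real k) / (real a + 1 + real k - real m)
                 * real ((a + b - 2 * m) choose (b - k - m)))"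
proof (cases "b < k + m")
  case True then show ?thesis unfolding Fm_def by simp
next
  case False
  define n where "n = a + b - 2*m"
  define c where "c = b - k - m"
  have ic: "int b - int m - int k = int c" using False c_def by auto
  have Fmc: "Fm a b m k = G n (int c)" unfolding Fm_def n_def using False ic by simp
  have D: "real a + 1 + real k - real m > 0" using False assms by simp
  show ?thesis
  proof (cases "c = 0")
    case True
    have "G n (int c) = 1" using True unfolding G_def Cz_def by simp
    moreover have "real a - real b + 1 + 2 * real k = real a + 1 + real k - real m"
      using True c_def False by (simp add: of_nat_diff)
    ultimately show ?thesis using Fmc False D c_def[symmetric] True by simp
  next
    case False
    then obtain d where d: "c = Suc d" by (cases c) auto
    have dn: "d < n" using d c_def n_def \<open>\<not> b < k + m\<close> assms by auto
    have nat_id: "(n - d) * (n choose d) = Suc d * (n choose Suc d)"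
      using binomial_absorb_comp[of n d] binomial_absorption[of d n] by simp
    then have r_id: "(real n - real d) * real (n choose d) = real c * real (n choose c)"
      using d dn by (metis of_nat_diff of_nat_mult less_imp_le)
    have e2: "nat (int c - 1) = d" using d by simp
    have G_eq: "real_of_int (G n (int c)) = real (n choose c) - real (n choose d)"
      unfolding G_def Cz_def using e2 \<open>c \<noteq> 0\<close> by simp
    have rn: "real n = real a + real b - 2 * real m" using n_def \<open>\<not> b < k + m\<close> assms by (simp add: of_nat_diff)
    have rc: "real c = real b - real k - real m" using c_def \<open>\<not> b < k + m\<close> by (simp add: of_nat_diff)
    have rd: "real n - real d = real a + 1 + real k - real m" using rn rc d by simp
    have "real (n choose d) = real c * real (n choose c) / (real a + 1 + real k - real m)"
      using r_id rd D by (simp add: field_simps)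
    then have "real_of_int (G n (int c)) = real (n choose c) - real c * real (n choose c) / (real a + 1 + real k - real m)"
      using G_eq by simp
    also have "\<dots> = real (n choose c) * (real a + 1 + real k - real m - real c) / (real a + 1 + real k - real m)"
      using D by (simp add: field_simps)
    also have "real a + 1 + real k - real m - real c = real a - real b + 1 + 2 * real k" using rc by simp
    finally show ?thesis using Fmc \<open>\<not> b < k + m\<close> n_def c_def by simp
  qed
qed

theorem mainTheorem15:
  fixes a b m :: nat and mu :: "nat list"
  assumes "a \<ge> b" and "b \<ge> 1"
    and "sum_list mu = a + b"
    and "set mu \<subseteq> {1, 2}"
    and "length (filter (\<lambda>x. x = 2) mu) = m"
  shows "\<forall>k::nat. real (card (S k [a, b] mu)) =
           (if b < k + m then 0
            else (real a - real b + 1 + 2 * real k) / (real a + 1 + real k - real m)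
                 * real ((a + b - 2 * m) choose (b - k - m)))"
proof
  fix k :: nat
  have "int (card (S2 k a b mu)) = Fm a b m k"
    using main_count[of mu] assms by blast
  then have "real (card (S k [a, b] mu)) = real_of_int (Fm a b m k)"
    unfolding card_S_S2 by (metis of_int_of_nat_eq)
  then show "real (card (S k [a, b] mu)) =
           (if b < k + m then 0
            else (real a - real b + 1 + 2 * real k) / (real a + 1 + real k - real m)
                 * real ((a + b - 2 * m) choose (b - k - m)))"
    using Fm_real[OF assms(1)] by simp
qed


end
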